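(* Let $\mathcal X\subseteq\mathbb R^m$ be nonempty, convex and compact with diameter $D>0$, $F:\mathbb R^m\to\mathbb R^r$ affine, $C\in\mathbb R^{r\times n}$, $\Theta(x,y)=\frac12\|F(x)-Cy\|^2$, and let $L>0$ be such that for every $y\in\{0,1\}^n$, $\Theta(\cdot,y)$ is $L$-Lipschitz on $\mathcal X$ and $\|\nabla_x\Theta(x,y)\|\le L$ for $x\in\mathcal X$. Let $\operatorname{ALG}$ be a $\gamma$-approximation algorithm ($\gamma\in(0,1]$) for maximizing $\Theta(x,\cdot)$ over $\{0,1\}^n$, for every $x\in\mathcal X$. Given $\epsilon>0$, set $K=\lceil((D^2+L^2)/(2\epsilon))^2\rceil$, choose $x_0\in\mathcal X$, and for $k=0,\dots,K-1$ let $y_k=\operatorname{ALG}(\Theta(x_k,\cdot))$ and $x_{k+1}=\operatorname{Proj}_{\mathcal X}(x_k-K^{-1/2}\nabla_x\Theta(x_k,y_k))$. Let $\hat x=\frac1K\sum_{k=0}^{K-1}x_k$ and $\hat y=\operatorname{ALG}(\Theta(\hat x,\cdot))$. Then $(\hat x,\hat y)$ is a $(\gamma,\epsilon/\gamma)$-approximate minimax point of $\min_{x\in\mathcal X}\max_{y\in\{0,1\}^n}\Theta(x,y)$.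
   Context: $\operatorname{Proj}_{\mathcal X}$ is Euclidean projection onto $\mathcal X$. An algorithm is a $\gamma$-approximation algorithm for $\max_{y\in\mathcal Y}h(y)$ with nonnegative $h$ if on every instance it returns, in polynomial time, a feasible $\hat y\in\mathcal Y$ with $h(\hat y)\ge\gamma h(y^* )$ where $y^*$ is optimal. With $\mathcal Y=\{0,1\}^n$, a pair $(x^*,y^* )\in\mathcal X\times\mathcal Y$ is an $(\alpha,\epsilon)$-approximate minimax point ($\alpha\in(0,1]$, $\epsilon\ge0$) if $\alpha\max_{y\in\mathcal Y}\Theta(x^*,y)\le\Theta(x^*,y^* )\le\frac1\alpha\min_{x\in\mathcal X}\max_{y\in\mathcal Y}\Theta(x,y)+\epsilon$. *)

theory Defs
  imports "HOL-Analysis.Analysis"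
begin

definition binvecs :: "(real^'n) set" where
  "binvecs = {y. \<forall>i. y $ i = 0 \<or> y $ i = 1}"

definition grad :: "('a::real_inner \<Rightarrow> real) \<Rightarrow> 'a \<Rightarrow> 'a" where
  "grad f x = (SOME g. (f has_derivative (\<lambda>h. g \<bullet> h)) (at x))"

abbreviation Proj :: "'a::euclidean_space set \<Rightarrow> 'a \<Rightarrow> 'a" where
  "Proj X z \<equiv> closest_point X z"

definition approx_alg_on :: "real \<Rightarrow> ('b set) \<Rightarrow> (('b \<Rightarrow> real) \<Rightarrow> 'b) \<Rightarrow> ('b \<Rightarrow> real) \<Rightarrow> bool" where
  "approx_alg_on \<gamma> Y ALG h \<longleftrightarrow> ALG h \<in> Y \<and> (\<forall>y\<in>Y. \<gamma> * h y \<le> h (ALG h))"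

definition approx_minimax ::
  "('a \<Rightarrow> 'b \<Rightarrow> real) \<Rightarrow> 'a set \<Rightarrow> 'b set \<Rightarrow> real \<Rightarrow> real \<Rightarrow> 'a \<Rightarrow> 'b \<Rightarrow> bool" where
  "approx_minimax \<Theta> X Y \<alpha> \<epsilon> xs ys \<longleftrightarrow>
     xs \<in> X \<and> ys \<in> Y \<and>
     \<alpha> * (MAX y\<in>Y. \<Theta> xs y) \<le> \<Theta> xs ys \<and>
     \<Theta> xs ys \<le> (1/\<alpha>) * (INF x\<in>X. MAX y\<in>Y. \<Theta> x y) + \<epsilon>"

end

theory Submission
  imports Defs
begin
lemma deriv_theta:
  fixes A :: "real^'m^'r" and c :: "real^'r"
  shows "((\<lambda>z. (1/2) * (norm (A *v z + c))\<^sup>2) has_derivative (\<lambda>h. ((A *v x + c) v* A) \<bullet> h)) (at x)"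
proof -
  have lin: "bounded_linear (\<lambda>z. A *v z)" by (simp add: matrix_vector_mul_linear linear_conv_bounded_linear)
  have d1: "((\<lambda>z. A *v z + c) has_derivative (\<lambda>h. A *v h)) (at x)"
    using lin[THEN bounded_linear.has_derivative, OF has_derivative_ident]
    by (intro has_derivative_add_const) simp
  have e: "\<And>z. (norm (A *v z + c))\<^sup>2 = (A *v z + c) \<bullet> (A *v z + c)" by (simp add: power2_norm_eq_inner)
  have d2: "((\<lambda>z. (A *v z + c) \<bullet> (A *v z + c)) has_derivative (\<lambda>h. (A *v x + c) \<bullet> (A *v h) + (A *v h) \<bullet> (A *v x + c))) (at x)"
    by (rule has_derivative_inner[OF d1 d1])
  note d3 = has_derivative_mult_right[OF d2, of "1/2"]
  have fe: "(\<lambda>h. (1/2) * ((A *v x + c) \<bullet> (A *v h) + (A *v h) \<bullet> (A *v x + c))) = (\<lambda>h. ((A *v x + c) v* A) \<bullet> h)"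
    by (rule ext) (simp add: dot_lmul_matrix inner_commute[of "A *v _"])
  show ?thesis unfolding e
    using d3 unfolding fe .
qed

lemma grad_theta:
  fixes A :: "real^'m^'r" and c :: "real^'r"
  shows "grad (\<lambda>z. (1/2) * (norm (A *v z + c))\<^sup>2) x = (A *v x + c) v* A"
  unfolding grad_def
proof (rule some_equality)
  show "((\<lambda>z. (1/2) * (norm (A *v z + c))\<^sup>2) has_derivative (\<lambda>h. ((A *v x + c) v* A) \<bullet> h)) (at x)"
    by (rule deriv_theta)
next
  fix g assume "((\<lambda>z. (1/2) * (norm (A *v z + c))\<^sup>2) has_derivative (\<lambda>h. g \<bullet> h)) (at x)"
  from has_derivative_unique[OF this deriv_theta]
  have "(\<lambda>h. g \<bullet> h) = (\<lambda>h. ((A *v x + c) v* A) \<bullet> h)" .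
  hence "g \<bullet> (g - (A *v x + c) v* A) = ((A *v x + c) v* A) \<bullet> (g - (A *v x + c) v* A)" by metis
  hence "(g - (A *v x + c) v* A) \<bullet> (g - (A *v x + c) v* A) = 0" by (simp add: inner_diff_left)
  thus "g = (A *v x + c) v* A" by simp
qed

lemma tangent_theta:
  fixes A :: "real^'m^'r" and c :: "real^'r"
  shows "(1/2) * (norm (A *v p + c))\<^sup>2 \<ge> (1/2) * (norm (A *v x + c))\<^sup>2 + ((A *v x + c) v* A) \<bullet> (p - x)"
proof -
  define r where "r = A *v x + c"
  define u where "u = A *v (p - x)"
  have "A *v p + c = r + u" unfolding r_def u_def by (simp add: matrix_vector_mult_diff_distrib)
  hence "(norm (A *v p + c))\<^sup>2 = (norm r)\<^sup>2 + 2 * (r \<bullet> u) + (norm u)\<^sup>2"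
    by (simp add: power2_norm_eq_inner inner_add inner_commute)
  moreover have "r \<bullet> u = ((A *v x + c) v* A) \<bullet> (p - x)" unfolding r_def u_def by (simp add: dot_lmul_matrix)
  moreover have "(norm u)\<^sup>2 \<ge> 0" by simp
  ultimately show ?thesis unfolding r_def by linarith
qed

lemma finite_binvecs: "finite (binvecs :: (real^'n) set)"
proof -
  have "binvecs \<subseteq> vec_lambda ` (Pi UNIV (\<lambda>_::'n. {0::real,1}))"
  proof
    fix v :: "real^'n" assume "v \<in> binvecs"
    hence "vec_nth v \<in> Pi UNIV (\<lambda>_. {0,1})" unfolding binvecs_def by auto
    thus "v \<in> vec_lambda ` (Pi UNIV (\<lambda>_::'n. {0::real,1}))" by (metis image_eqI vec_nth_inverse)
  qed
  moreover have "finite (Pi UNIV (\<lambda>_::'n. {0::real,1}))"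
    using finite_PiE[of "UNIV::'n set" "\<lambda>_. {0::real,1}"] by (simp add: PiE_UNIV_domain)
  ultimately show ?thesis by (meson finite_imageI finite_subset)
qed

lemma zero_binvecs: "0 \<in> binvecs" unfolding binvecs_def by simp
theorem mainTheorem6:
  fixes X :: "(real^'m) set" and F :: "real^'m \<Rightarrow> real^'r"
    and A :: "real^'m^'r" and b :: "real^'r" and C :: "real^'n^'r"
    and \<Theta> :: "real^'m \<Rightarrow> real^'n \<Rightarrow> real"
    and D L \<gamma> \<epsilon> :: real and K :: nat
    and ALG :: "(real^'n \<Rightarrow> real) \<Rightarrow> real^'n"
    and x :: "nat \<Rightarrow> real^'m" and y :: "nat \<Rightarrow> real^'n"
    and xhat :: "real^'m" and yhat :: "real^'n"
  assumes X_ne: "X \<noteq> {}" and X_convex: "convex X" and X_compact: "compact X"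
    and D_def: "D = diameter X" and D_pos: "D > 0"
    and F_affine: "\<forall>z. F z = A *v z + b"
    and Theta_def: "\<forall>z w. \<Theta> z w = (1/2) * (norm (F z - C *v w))\<^sup>2"
    and L_pos: "L > 0"
    and lip: "\<forall>w\<in>binvecs. L-lipschitz_on X (\<lambda>z. \<Theta> z w)"
    and grad_bd: "\<forall>w\<in>binvecs. \<forall>z\<in>X. norm (grad (\<lambda>z'. \<Theta> z' w) z) \<le> L"
    and gamma: "0 < \<gamma>" "\<gamma> \<le> 1"
    and ALG: "\<forall>z\<in>X. approx_alg_on \<gamma> binvecs ALG (\<Theta> z)"
    and eps: "\<epsilon> > 0"
    and K_def: "K = nat \<lceil>((D\<^sup>2 + L\<^sup>2) / (2 * \<epsilon>))\<^sup>2\<rceil>"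
    and x0: "x 0 \<in> X"
    and y_def: "\<forall>k<K. y k = ALG (\<Theta> (x k))"
    and x_step: "\<forall>k<K. x (Suc k) = Proj X (x k - (1 / sqrt (real K)) *\<^sub>R grad (\<lambda>z. \<Theta> z (y k)) (x k))"
    and xhat_def: "xhat = (1 / real K) *\<^sub>R (\<Sum>k<K. x k)"
    and yhat_def: "yhat = ALG (\<Theta> xhat)"
  shows "approx_minimax \<Theta> X binvecs \<gamma> (\<epsilon> / \<gamma>) xhat yhat"
proof -
  define G where "G z w = (A *v z + (b - C *v w)) v* A" for z w
  have Th: "\<And>z w. \<Theta> z w = (1/2) * (norm (A *v z + (b - C *v w)))\<^sup>2"
    using Theta_def F_affine by (simp add: add_diff_eq)
  have gradG: "\<And>z w. grad (\<lambda>z'. \<Theta> z' w) z = G z w"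
    unfolding Th G_def by (rule grad_theta)
  have tang: "\<And>z p w. \<Theta> p w \<ge> \<Theta> z w + G z w \<bullet> (p - z)"
    unfolding Th G_def by (rule tangent_theta)
  have closedX: "closed X" using X_compact compact_imp_closed by auto
  have bddX: "bounded X" using X_compact compact_imp_bounded by auto
  define S where "S = (D\<^sup>2 + L\<^sup>2) / (2 * \<epsilon>)"
  have S_pos: "S > 0" unfolding S_def using L_pos eps by (simp add: add_nonneg_pos)
  have KS: "real K \<ge> S\<^sup>2" unfolding K_def S_def[symmetric] by linarith
  have Kpos: "K > 0" using KS S_pos
    by (metis not_gr0 of_nat_0 power2_less_0 zero_less_power2 linorder_not_le less_le) 
  have sqK: "sqrt (real K) \<ge> S"
    using real_sqrt_le_mono[OF KS] S_pos by simp
  have xX: "\<And>k. k \<le> K \<Longrightarrow> x k \<in> X"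
  proof -
    fix k show "k \<le> K \<Longrightarrow> x k \<in> X"
    proof (induction k)
      case 0 then show ?case using x0 by simp
    next
      case (Suc k)
      then have "k < K" by simp
      then show ?case using x_step closest_point_in_set[OF closedX X_ne] by simp
    qed
  qed
  have yB: "\<And>k. k < K \<Longrightarrow> y k \<in> binvecs"
    using ALG y_def xX approx_alg_on_def by (metis less_imp_le)
  have ALGk: "\<And>k w. k < K \<Longrightarrow> w \<in> binvecs \<Longrightarrow> \<gamma> * \<Theta> (x k) w \<le> \<Theta> (x k) (y k)"
    using ALG y_def xX approx_alg_on_def by (metis less_imp_le)
  have gbd: "\<And>k. k < K \<Longrightarrow> norm (G (x k) (y k)) \<le> L"
    using grad_bd gradG yB xX by (metis less_imp_le)
  define \<eta> where "\<eta> = 1 / sqrt (real K)"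
  have eta_pos: "\<eta> > 0" unfolding \<eta>_def using Kpos by simp
  have Keta: "real K * \<eta>\<^sup>2 = 1" unfolding \<eta>_def using Kpos by (simp add: power_divide)
  have step: "2 * \<eta> * (\<Theta> (x k) (y k) - \<Theta> p (y k))
      \<le> (norm (x k - p))\<^sup>2 - (norm (x (Suc k) - p))\<^sup>2 + \<eta>\<^sup>2 * L\<^sup>2"
    if k: "k < K" and p: "p \<in> X" for k p
  proof -
    define g where "g = G (x k) (y k)"
    have xs: "x (Suc k) = closest_point X (x k - \<eta> *\<^sub>R g)"
      using x_step k gradG unfolding g_def \<eta>_def by simp
    have "norm (x (Suc k) - p) \<le> norm (x k - \<eta> *\<^sub>R g - p)"
      using closest_point_lipschitz[OF X_convex closedX X_ne, of "x k - \<eta> *\<^sub>R g" p]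
        closest_point_self[OF p] xs by (simp add: dist_norm)
    hence "(norm (x (Suc k) - p))\<^sup>2 \<le> (norm (x k - \<eta> *\<^sub>R g - p))\<^sup>2"
      by (simp add: power_mono)
    also have "(norm (x k - \<eta> *\<^sub>R g - p))\<^sup>2
        = (norm (x k - p))\<^sup>2 - 2 * \<eta> * (g \<bullet> (x k - p)) + \<eta>\<^sup>2 * (norm g)\<^sup>2"
    proof -
      define u where "u = x k - p"
      have "x k - \<eta> *\<^sub>R g - p = u - \<eta> *\<^sub>R g" unfolding u_def by simp
      moreover have "(norm (u - \<eta> *\<^sub>R g))\<^sup>2 = (norm u)\<^sup>2 - 2 * \<eta> * (g \<bullet> u) + \<eta>\<^sup>2 * (norm g)\<^sup>2"
        unfolding power2_norm_eq_inner
        by (simp add: inner_diff_left inner_diff_right inner_commute power2_eq_square algebra_simps)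
      ultimately show ?thesis unfolding u_def by metis
    qed
    finally have a: "(norm (x (Suc k) - p))\<^sup>2
        \<le> (norm (x k - p))\<^sup>2 - 2 * \<eta> * (g \<bullet> (x k - p)) + \<eta>\<^sup>2 * (norm g)\<^sup>2" .
    have "(norm g)\<^sup>2 \<le> L\<^sup>2" using gbd[OF k] unfolding g_def by (simp add: power_mono)
    hence b: "\<eta>\<^sup>2 * (norm g)\<^sup>2 \<le> \<eta>\<^sup>2 * L\<^sup>2" by (simp add: mult_left_mono)
    have "\<Theta> p (y k) \<ge> \<Theta> (x k) (y k) + g \<bullet> (p - x k)" using tang unfolding g_def by blast
    moreover have "g \<bullet> (p - x k) = - (g \<bullet> (x k - p))" by (simp add: inner_diff_right)
    ultimately have "\<Theta> (x k) (y k) - \<Theta> p (y k) \<le> g \<bullet> (x k - p)" by linarith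
    hence c: "2 * \<eta> * (\<Theta> (x k) (y k) - \<Theta> p (y k)) \<le> 2 * \<eta> * (g \<bullet> (x k - p))"
      using eta_pos by (simp add: mult_left_mono)
    show ?thesis using a b c by linarith
  qed
  have sumb: "(\<Sum>k<K. \<Theta> (x k) (y k) - \<Theta> p (y k)) \<le> real K * \<epsilon>" if p: "p \<in> X" for p
  proof -
    define a where "a k = (norm (x k - p))\<^sup>2" for k
    have "2 * \<eta> * (\<Sum>k<K. \<Theta> (x k) (y k) - \<Theta> p (y k))
        = (\<Sum>k<K. 2 * \<eta> * (\<Theta> (x k) (y k) - \<Theta> p (y k)))" by (simp add: sum_distrib_left)
    also have "\<dots> \<le> (\<Sum>k<K. (a k - a (Suc k)) + \<eta>\<^sup>2 * L\<^sup>2)"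
      by (rule sum_mono) (use step p in \<open>auto simp: a_def\<close>)
    also have "\<dots> = a 0 - a K + real K * \<eta>\<^sup>2 * L\<^sup>2"
      by (simp add: sum.distrib sum_lessThan_telescope')
    also have "\<dots> \<le> D\<^sup>2 + L\<^sup>2"
    proof -
      have "norm (x 0 - p) \<le> D" using diameter_bounded_bound[OF bddX x0 p] D_def by (simp add: dist_norm)
      hence "a 0 \<le> D\<^sup>2" unfolding a_def by (simp add: power_mono)
      moreover have "a K \<ge> 0" unfolding a_def by simp
      ultimately show ?thesis using Keta by simp
    qed
    also have "\<dots> = 2 * \<epsilon> * S" unfolding S_def using eps by simp
    also have "\<dots> \<le> 2 * \<epsilon> * sqrt (real K)" using sqK eps by simp
    finally have "2 * \<eta> * (\<Sum>k<K. \<Theta> (x k) (y k) - \<Theta> p (y k)) \<le> 2 * \<epsilon> * sqrt (real K)" .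
    hence "(\<Sum>k<K. \<Theta> (x k) (y k) - \<Theta> p (y k)) * (2 / sqrt (real K)) \<le> 2 * \<epsilon> * sqrt (real K)"
      unfolding \<eta>_def by (simp add: algebra_simps)
    hence "(\<Sum>k<K. \<Theta> (x k) (y k) - \<Theta> p (y k)) \<le> \<epsilon> * sqrt (real K) * sqrt (real K)"
      using Kpos by (simp add: field_simps)
    moreover have "\<epsilon> * sqrt (real K) * sqrt (real K) = real K * \<epsilon>"
      by (simp only: mult.assoc real_sqrt_mult_self) (simp add: mult.commute)
    ultimately show ?thesis by linarith
  qed
  have xhat_sum: "xhat = (\<Sum>k<K. (1 / real K) *\<^sub>R x k)"
    unfolding xhat_def by (simp add: scaleR_sum_right)
  have xhatX: "xhat \<in> X"
    unfolding xhat_sum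
    by (rule convex_sum[OF _ X_convex]) (use Kpos xX in auto)
  have sumx: "(\<Sum>k<K. x k) = real K *\<^sub>R xhat" unfolding xhat_def using Kpos by simp
  have jensen: "real K * \<Theta> xhat w \<le> (\<Sum>k<K. \<Theta> (x k) w)" for w
  proof -
    have "(\<Sum>k<K. \<Theta> xhat w + G xhat w \<bullet> (x k - xhat)) \<le> (\<Sum>k<K. \<Theta> (x k) w)"
      by (rule sum_mono) (use tang in blast)
    moreover have "(\<Sum>k<K. G xhat w \<bullet> (x k - xhat)) = 0"
      by (simp add: inner_sum_right[symmetric] sum_subtractf sumx sum_constant_scaleR del: sum_constant)
    ultimately show ?thesis by (simp add: sum.distrib)
  qed
  have finB: "finite binvecs" by (rule finite_binvecs)
  have yhatB: "yhat \<in> binvecs" and ALGhat: "\<And>w. w \<in> binvecs \<Longrightarrow> \<gamma> * \<Theta> xhat w \<le> \<Theta> xhat yhat"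
    using ALG xhatX unfolding yhat_def approx_alg_on_def by auto
  have part1: "\<gamma> * (MAX w\<in>binvecs. \<Theta> xhat w) \<le> \<Theta> xhat yhat"
  proof -
    have "(MAX w\<in>binvecs. \<Theta> xhat w) \<in> (\<lambda>w. \<Theta> xhat w) ` binvecs"
      using finB zero_binvecs by (intro Max_in) auto
    then obtain w where "w \<in> binvecs" "(MAX w\<in>binvecs. \<Theta> xhat w) = \<Theta> xhat w" by auto
    thus ?thesis using ALGhat by simp
  qed
  have key: "\<gamma> * \<Theta> xhat yhat - \<epsilon> \<le> (MAX w\<in>binvecs. \<Theta> p w)" if p: "p \<in> X" for p
  proof -
    define M where "M = (MAX w\<in>binvecs. \<Theta> p w)"
    have Mge: "\<Theta> p w \<le> M" if "w \<in> binvecs" for w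
      unfolding M_def using finB that by (intro Max_ge) auto
    have "\<gamma> * (real K * \<Theta> xhat yhat) \<le> \<gamma> * (\<Sum>k<K. \<Theta> (x k) yhat)"
      using jensen gamma by (simp add: mult_left_mono)
    also have "\<dots> = (\<Sum>k<K. \<gamma> * \<Theta> (x k) yhat)" by (simp add: sum_distrib_left)
    also have "\<dots> \<le> (\<Sum>k<K. \<Theta> (x k) (y k))"
      by (rule sum_mono) (use ALGk yhatB in auto)
    also have "\<dots> \<le> (\<Sum>k<K. \<Theta> p (y k)) + real K * \<epsilon>"
      using sumb[OF p] by (simp add: sum_subtractf)
    also have "(\<Sum>k<K. \<Theta> p (y k)) \<le> (\<Sum>k<K. M)"
      by (rule sum_mono) (use Mge yB in auto)
    finally have "real K * (\<gamma> * \<Theta> xhat yhat) \<le> real K * (M + \<epsilon>)"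
      by (simp add: algebra_simps)
    hence "\<gamma> * \<Theta> xhat yhat \<le> M + \<epsilon>" using Kpos by simp
    thus ?thesis unfolding M_def by simp
  qed
  have "\<gamma> * \<Theta> xhat yhat - \<epsilon> \<le> (INF p\<in>X. MAX w\<in>binvecs. \<Theta> p w)"
    by (rule cINF_greatest[OF X_ne]) (rule key)
  hence part2: "\<Theta> xhat yhat \<le> (1/\<gamma>) * (INF p\<in>X. MAX w\<in>binvecs. \<Theta> p w) + \<epsilon> / \<gamma>"
    using gamma by (simp add: field_simps)
  show ?thesis unfolding approx_minimax_def using xhatX yhatB part1 part2 by simp
qed

end
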